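(* Let $\Omega\subset\mathbb{R}^d$ be compact and let $\Phi\in C(\Omega\times\Omega)$ be a symmetric positive definite kernel whose reproducing kernel Hilbert space $\mathcal{N}_\Phi(\Omega)$ is dense in $L_2(\Omega)$. Let $\omega_{\tau_1},\dots,\omega_{\tau_n}\subseteq\Omega$ be Lebesgue measurable sets of positive measure whose characteristic functions $\chi_{\omega_{\tau_1}},\dots,\chi_{\omega_{\tau_n}}$ are linearly independent in $L_2(\Omega)$. Then the matrix $\mathbf{K}\in\mathbb{R}^{n\times n}$ with entries \[\mathbf{K}_{i,j}=\frac{1}{|\omega_{\tau_i}|}\frac{1}{|\omega_{\tau_j}|}\int_{\omega_{\tau_i}}\int_{\omega_{\tau_j}}\Phi(x,y)\,\mathrm{d}x\,\mathrm{d}y\] is symmetric and positive definite, and in particular invertible.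
   Context: $|\omega|$ denotes Lebesgue measure and $\chi_\omega$ the indicator function of $\omega$. A kernel $\Phi$ is positive definite if for all distinct $x_1,\dots,x_m$ the matrix $(\Phi(x_k,x_\ell))_{k,\ell}$ is positive definite. *)

theory Defs
  imports "HOL-Analysis.Analysis"
begin

text \<open>Finitely supported coefficient functions with centres in \<Omega>:
  they encode finite kernel expansions  sum_y c(y) Phi(., y).\<close>
definition fin_coeff :: "'a set \<Rightarrow> ('a \<Rightarrow> real) \<Rightarrow> bool" where
  "fin_coeff \<Omega> c \<longleftrightarrow> finite {x. c x \<noteq> 0} \<and> {x. c x \<noteq> 0} \<subseteq> \<Omega>"

definition kernel_fun :: "('a \<Rightarrow> 'a \<Rightarrow> real) \<Rightarrow> ('a \<Rightarrow> real) \<Rightarrow> 'a \<Rightarrow> real" where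
  "kernel_fun \<Phi> c = (\<lambda>x. \<Sum>y\<in>{y. c y \<noteq> 0}. c y * \<Phi> x y)"

definition kernel_norm2 :: "('a \<Rightarrow> 'a \<Rightarrow> real) \<Rightarrow> ('a \<Rightarrow> real) \<Rightarrow> real" where
  "kernel_norm2 \<Phi> c = (\<Sum>x\<in>{x. c x \<noteq> 0}. \<Sum>y\<in>{y. c y \<noteq> 0}. c x * c y * \<Phi> x y)"

definition pd_kernel :: "'a set \<Rightarrow> ('a \<Rightarrow> 'a \<Rightarrow> real) \<Rightarrow> bool" where
  "pd_kernel \<Omega> \<Phi> \<longleftrightarrow> (\<forall>X c. finite X \<and> X \<subseteq> \<Omega> \<and> (\<exists>x\<in>X. c x \<noteq> 0) \<longrightarrow>
      (\<Sum>x\<in>X. \<Sum>y\<in>X. c x * c y * \<Phi> x y) > 0)"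

text \<open>Native space (RKHS) N_Phi(\<Omega>): completion of the span of the kernel
  translates, realised as pointwise limits on \<Omega> of native-norm Cauchy
  sequences of finite kernel expansions.\<close>
definition native_space :: "'a set \<Rightarrow> ('a \<Rightarrow> 'a \<Rightarrow> real) \<Rightarrow> ('a \<Rightarrow> real) set" where
  "native_space \<Omega> \<Phi> = {f. \<exists>s. (\<forall>m. fin_coeff \<Omega> (s m)) \<and>
      (\<forall>\<epsilon>>0. \<exists>N. \<forall>m\<ge>N. \<forall>k\<ge>N. kernel_norm2 \<Phi> (\<lambda>x. s m x - s k x) < \<epsilon>) \<and>
      (\<forall>x\<in>\<Omega>. (\<lambda>m. kernel_fun \<Phi> (s m) x) \<longlonglongrightarrow> f x)}"

definition dense_in_L2 :: "('a::euclidean_space) set \<Rightarrow> ('a \<Rightarrow> real) set \<Rightarrow> bool" where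
  "dense_in_L2 \<Omega> F \<longleftrightarrow> (\<forall>f \<in> borel_measurable lebesgue.
      (\<integral>\<^sup>+x\<in>\<Omega>. ennreal ((f x)\<^sup>2) \<partial>lebesgue) < \<infinity> \<longrightarrow>
      (\<forall>\<epsilon>>0. \<exists>g\<in>F. (\<integral>\<^sup>+x\<in>\<Omega>. ennreal ((f x - g x)\<^sup>2) \<partial>lebesgue) < ennreal \<epsilon>))"

definition indicators_lin_indep_L2 :: "('a::euclidean_space) set \<Rightarrow> ('n::finite \<Rightarrow> 'a set) \<Rightarrow> bool" where
  "indicators_lin_indep_L2 \<Omega> \<omega> \<longleftrightarrow> (\<forall>c::'n \<Rightarrow> real.
      (AE x in lebesgue. x \<in> \<Omega> \<longrightarrow> (\<Sum>i\<in>UNIV. c i * indicator (\<omega> i) x) = 0) \<longrightarrow> (\<forall>i. c i = 0))"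

definition Kmat :: "('a::euclidean_space \<Rightarrow> 'a \<Rightarrow> real) \<Rightarrow> ('n::finite \<Rightarrow> 'a set) \<Rightarrow> real^'n^'n" where
  "Kmat \<Phi> \<omega> = (\<chi> i j. 1 / measure lebesgue (\<omega> i) * (1 / measure lebesgue (\<omega> j)) *
      (LINT x:\<omega> i|lebesgue. (LINT y:\<omega> j|lebesgue. \<Phi> x y)))"

definition pos_def_matrix :: "real^'n^'n \<Rightarrow> bool" where
  "pos_def_matrix A \<longleftrightarrow> (\<forall>v. v \<noteq> 0 \<longrightarrow> v \<bullet> (A *v v) > 0)"

end

theory Submission
  imports Defs
begin


lemma sigma_finite_lebesgue: "sigma_finite_measure (lebesgue :: 'a::euclidean_space measure)"
proof -
  interpret lborel: sigma_finite_measure "lborel :: 'a measure" by (rule sigma_finite_lborel)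
  obtain A :: "'a set set" where A: "countable A" "A \<subseteq> sets lborel" "\<Union>A = space lborel" "\<forall>a\<in>A. emeasure lborel a \<noteq> \<infinity>"
    using lborel.sigma_finite_countable by blast
  show ?thesis
    apply unfold_locales
    apply (rule exI[of _ A])
    using A by (auto simp: sets_lborel)
qed

interpretation leb: sigma_finite_measure "lebesgue :: 'a::euclidean_space measure"
  by (rule sigma_finite_lebesgue)
interpretation leb_pair: pair_sigma_finite "lebesgue :: 'a::euclidean_space measure" "lebesgue :: 'a measure" ..

lemma id_leb_lborel: "(\<lambda>x. x) \<in> (lebesgue :: 'a::euclidean_space measure) \<rightarrow>\<^sub>M lborel"
  by (rule measurable_completion) simp

lemma borel_to_LL:
  fixes f :: "'a::euclidean_space \<times> 'a \<Rightarrow> real"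
  assumes "f \<in> borel_measurable borel"
  shows "f \<in> borel_measurable (lebesgue \<Otimes>\<^sub>M lebesgue)"
proof -
  have "(\<lambda>z. (fst z, snd z)) \<in> (lebesgue \<Otimes>\<^sub>M lebesgue) \<rightarrow>\<^sub>M (lborel \<Otimes>\<^sub>M (lborel :: 'a measure))"
    by (intro measurable_Pair measurable_compose[OF measurable_fst id_leb_lborel]
         measurable_compose[OF measurable_snd id_leb_lborel])
  then have "(\<lambda>z. z) \<in> (lebesgue \<Otimes>\<^sub>M lebesgue) \<rightarrow>\<^sub>M (lborel :: ('a\<times>'a) measure)"
    by (simp add: lborel_prod)
  then have "(\<lambda>z. z) \<in> (lebesgue \<Otimes>\<^sub>M lebesgue) \<rightarrow>\<^sub>M (borel :: ('a\<times>'a) measure)"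
    by (simp add: measurable_lborel1 cong: measurable_cong_sets)
  from measurable_compose[OF this assms] show ?thesis by simp
qed

lemma sum_group_coeff:
  fixes w :: "'i \<Rightarrow> real"
  assumes "finite I"
  shows "(\<Sum>p\<in>z`I. (\<Sum>i\<in>{i\<in>I. z i = p}. w i) * F p) = (\<Sum>i\<in>I. w i * F (z i))"
proof -
  have "(\<Sum>p\<in>z`I. (\<Sum>i\<in>{i\<in>I. z i = p}. w i) * F p) = (\<Sum>p\<in>z`I. \<Sum>i\<in>{i\<in>I. z i = p}. w i * F (z i))"
    by (auto simp: sum_distrib_right intro!: sum.cong)
  also have "\<dots> = (\<Sum>i\<in>I. w i * F (z i))"
    by (rule sum.group) (use assms in auto)
  finally show ?thesis .
qed

lemma pd_general:
  fixes w :: "'i \<Rightarrow> real"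
  assumes pd: "pd_kernel \<Omega> \<Phi>" and I: "finite I" and z: "z ` I \<subseteq> \<Omega>"
  shows "(\<Sum>i\<in>I. \<Sum>j\<in>I. w i * w j * \<Phi> (z i) (z j)) \<ge> 0"
proof -
  define c where "c p = (\<Sum>i\<in>{i\<in>I. z i = p}. w i)" for p
  have eq: "(\<Sum>p\<in>z`I. \<Sum>q\<in>z`I. c p * c q * \<Phi> p q) = (\<Sum>i\<in>I. \<Sum>j\<in>I. w i * w j * \<Phi> (z i) (z j))"
  proof -
    have "(\<Sum>p\<in>z`I. \<Sum>q\<in>z`I. c p * c q * \<Phi> p q) = (\<Sum>p\<in>z`I. c p * (\<Sum>q\<in>z`I. c q * \<Phi> p q))"
      by (simp add: sum_distrib_left mult.assoc)
    also have "\<dots> = (\<Sum>p\<in>z`I. c p * (\<Sum>j\<in>I. w j * \<Phi> p (z j)))"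
      unfolding c_def using sum_group_coeff[OF I, where z=z and w=w] by simp
    also have "\<dots> = (\<Sum>i\<in>I. w i * (\<Sum>j\<in>I. w j * \<Phi> (z i) (z j)))"
      unfolding c_def by (rule sum_group_coeff[OF I])
    also have "\<dots> = (\<Sum>i\<in>I. \<Sum>j\<in>I. w i * w j * \<Phi> (z i) (z j))"
      by (simp add: sum_distrib_left mult.assoc)
    finally show ?thesis .
  qed
  show ?thesis
  proof (cases "\<exists>p\<in>z`I. c p \<noteq> 0")
    case True
    with pd I z have "(\<Sum>p\<in>z`I. \<Sum>q\<in>z`I. c p * c q * \<Phi> p q) > 0"
      unfolding pd_kernel_def by blast
    with eq show ?thesis by simp
  next
    case False
    then have "(\<Sum>p\<in>z`I. \<Sum>q\<in>z`I. c p * c q * \<Phi> p q) = 0" by (intro sum.neutral ballI) auto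
    with eq show ?thesis by simp
  qed
qed


definition qf :: "('a \<Rightarrow> 'a \<Rightarrow> real) \<Rightarrow> 'a set \<Rightarrow> ('a \<Rightarrow> real) \<Rightarrow> real" where
  "qf \<Phi> X c = (\<Sum>x\<in>X. \<Sum>y\<in>X. c x * c y * \<Phi> x y)"

lemma knorm_eq:
  assumes "finite X" "{x. c x \<noteq> 0} \<subseteq> X"
  shows "kernel_norm2 \<Phi> c = qf \<Phi> X c"
proof -
  let ?S = "{x. c x \<noteq> 0}"
  have fS: "finite ?S" using assms finite_subset by blast
  have "kernel_norm2 \<Phi> c = (\<Sum>x\<in>?S. \<Sum>y\<in>X. c x * c y * \<Phi> x y)"
    unfolding kernel_norm2_def
    by (intro sum.cong refl sum.mono_neutral_left) (use assms in auto)
  also have "\<dots> = qf \<Phi> X c" unfolding qf_def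
    by (intro sum.mono_neutral_left) (use assms in auto)
  finally show ?thesis .
qed

lemma kfun_eq:
  assumes "finite X" "{x. c x \<noteq> 0} \<subseteq> X"
  shows "kernel_fun \<Phi> c x = (\<Sum>y\<in>X. c y * \<Phi> x y)"
  unfolding kernel_fun_def
  by (intro sum.mono_neutral_left) (use assms in auto)

lemma qf_parallel:
  "qf \<Phi> X (\<lambda>y. a y + b y) + qf \<Phi> X (\<lambda>y. a y - b y) = 2 * qf \<Phi> X a + 2 * qf \<Phi> X b"
  unfolding qf_def
  by (simp add: algebra_simps sum.distrib sum_distrib_left sum_subtractf)

lemma ite_mult01: "(if p then 1 else 0) * (y::real) = (if p then y else 0)" by simp

lemma qf_delta:
  assumes "finite X" "x \<in> X"
  shows "qf \<Phi> X (\<lambda>y. a y - t * (if y = x then 1 else 0)) =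
    qf \<Phi> X a - t * (\<Sum>q\<in>X. a q * \<Phi> x q) - t * (\<Sum>p\<in>X. a p * \<Phi> p x) + t * t * \<Phi> x x"
proof -
  define e :: "'a \<Rightarrow> real" where "e y = (if y = x then 1 else 0)" for y
  have "qf \<Phi> X (\<lambda>y. a y - t * e y) = (\<Sum>p\<in>X. \<Sum>q\<in>X. a p * a q * \<Phi> p q
      - t * (e p * (a q * \<Phi> p q)) - t * (e q * (a p * \<Phi> p q)) + t * t * (e p * (e q * \<Phi> p q)))"
    unfolding qf_def by (intro sum.cong refl) (simp add: algebra_simps)
  also have "\<dots> = qf \<Phi> X a - t * (\<Sum>p\<in>X. e p * (\<Sum>q\<in>X. a q * \<Phi> p q))
      - t * (\<Sum>q\<in>X. e q * (\<Sum>p\<in>X. a p * \<Phi> p q)) + t * t * (\<Sum>p\<in>X. e p * (\<Sum>q\<in>X. e q * \<Phi> p q))"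
  proof -
    have 1: "(\<Sum>p\<in>X. \<Sum>q\<in>X. t * (e q * (a p * \<Phi> p q))) = t * (\<Sum>q\<in>X. e q * (\<Sum>p\<in>X. a p * \<Phi> p q))"
      by (subst sum.swap) (simp add: sum_distrib_left)
    show ?thesis unfolding qf_def 1[symmetric]
      by (simp add: sum.distrib sum_subtractf sum_distrib_left)
  qed
  also have "\<dots> = qf \<Phi> X a - t * (\<Sum>q\<in>X. a q * \<Phi> x q) - t * (\<Sum>p\<in>X. a p * \<Phi> p x) + t * t * \<Phi> x x"
  proof -
    have d: "(\<Sum>p\<in>X. e p * f p) = f x" for f :: "'a \<Rightarrow> real"
      using assms by (simp add: e_def ite_mult01 sum.delta)
    show ?thesis by (simp add: d)
  qed
  finally show ?thesis by (simp add: e_def)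
qed

lemma qf_nonneg:
  assumes pd: "pd_kernel \<Omega> \<Phi>" and "finite X" "X \<subseteq> \<Omega>"
  shows "qf \<Phi> X w \<ge> 0"
  using pd_general[OF pd assms(2), of "\<lambda>x. x" w] assms(3) unfolding qf_def by simp

lemma kf_bound:
  assumes pd: "pd_kernel \<Omega> \<Phi>" and sym: "\<forall>x\<in>\<Omega>. \<forall>y\<in>\<Omega>. \<Phi> x y = \<Phi> y x"
    and c: "fin_coeff \<Omega> c" and x: "x \<in> \<Omega>"
  shows "2 * \<bar>kernel_fun \<Phi> c x\<bar> \<le> kernel_norm2 \<Phi> c + \<Phi> x x"
proof -
  define X where "X = insert x {y. c y \<noteq> 0}"
  have fX: "finite X" and XO: "X \<subseteq> \<Omega>" and xX: "x \<in> X" and sX: "{y. c y \<noteq> 0} \<subseteq> X"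
    using c x unfolding X_def fin_coeff_def by auto
  have kf: "kernel_fun \<Phi> c x = (\<Sum>q\<in>X. c q * \<Phi> x q)" by (rule kfun_eq[OF fX sX])
  have kf2: "(\<Sum>p\<in>X. c p * \<Phi> p x) = (\<Sum>q\<in>X. c q * \<Phi> x q)"
    using XO x sym by (intro sum.cong refl) auto
  have N: "kernel_norm2 \<Phi> c = qf \<Phi> X c" by (rule knorm_eq[OF fX sX])
  have "0 \<le> qf \<Phi> X (\<lambda>y. c y - t * (if y = x then 1 else 0))" for t
    by (rule qf_nonneg[OF pd fX XO])
  then have "0 \<le> kernel_norm2 \<Phi> c - 2 * t * kernel_fun \<Phi> c x + t * t * \<Phi> x x" for t
    unfolding qf_delta[OF fX xX] kf kf2 N by (simp add: mult.assoc)
  from this[of 1] this[of "-1"] show ?thesis by (simp add: abs_if)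
qed

lemma cauchy_norm_bounded:
  fixes s :: "nat \<Rightarrow> 'a \<Rightarrow> real"
  assumes pd: "pd_kernel \<Omega> \<Phi>" and s: "\<forall>m. fin_coeff \<Omega> (s m)"
    and cau: "\<forall>\<epsilon>>0. \<exists>N. \<forall>m\<ge>N. \<forall>k\<ge>N. kernel_norm2 \<Phi> (\<lambda>x. s m x - s k x) < \<epsilon>"
  shows "\<exists>R. \<forall>m. kernel_norm2 \<Phi> (s m) \<le> R"
proof -
  obtain N where N: "\<forall>m\<ge>N. \<forall>k\<ge>N. kernel_norm2 \<Phi> (\<lambda>x. s m x - s k x) < 1"
    using cau by (meson zero_less_one)
  define R where "R = 2 + 2 * kernel_norm2 \<Phi> (s N) + (\<Sum>m<N. \<bar>kernel_norm2 \<Phi> (s m)\<bar>)"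
  have "kernel_norm2 \<Phi> (s m) \<le> R" for m
  proof (cases "m < N")
    case True
    have "kernel_norm2 \<Phi> (s m) \<le> (\<Sum>m<N. \<bar>kernel_norm2 \<Phi> (s m)\<bar>)"
    proof -
      have "kernel_norm2 \<Phi> (s m) \<le> \<bar>kernel_norm2 \<Phi> (s m)\<bar>" by simp
      also have "\<dots> \<le> (\<Sum>m<N. \<bar>kernel_norm2 \<Phi> (s m)\<bar>)"
        using True by (intro member_le_sum) auto
      finally show ?thesis .
    qed
    moreover have "0 \<le> kernel_norm2 \<Phi> (s N)"
      using qf_nonneg[OF pd, of "{x. s N x \<noteq> 0}" "s N"] knorm_eq[of "{x. s N x \<noteq> 0}" "s N" \<Phi>] s
      unfolding fin_coeff_def by auto
    ultimately show ?thesis unfolding R_def by linarith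
  next
    case False
    define X where "X = {x. s m x \<noteq> 0} \<union> {x. s N x \<noteq> 0}"
    have fX: "finite X" and XO: "X \<subseteq> \<Omega>" using s unfolding X_def fin_coeff_def by auto
    define a where "a = (\<lambda>x. s m x - s N x)"
    have e1: "kernel_norm2 \<Phi> (s m) = qf \<Phi> X (\<lambda>x. a x + s N x)"
      using knorm_eq[OF fX, of "s m"] unfolding a_def X_def by auto
    have e2: "kernel_norm2 \<Phi> a = qf \<Phi> X a"
      by (rule knorm_eq[OF fX]) (auto simp: a_def X_def)
    have e3: "kernel_norm2 \<Phi> (s N) = qf \<Phi> X (s N)"
      using knorm_eq[OF fX, of "s N"] unfolding X_def by auto
    have "qf \<Phi> X (\<lambda>x. a x - s N x) \<ge> 0" by (rule qf_nonneg[OF pd fX XO])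
    moreover note qf_parallel[of \<Phi> X a "s N"]
    moreover have "kernel_norm2 \<Phi> a < 1" using N False unfolding a_def by auto
    moreover have "0 \<le> (\<Sum>m<N. \<bar>kernel_norm2 \<Phi> (s m)\<bar>)" by (simp add: sum_nonneg)
    ultimately show ?thesis unfolding R_def e1 e2 e3 by linarith
  qed
  then show ?thesis by blast
qed



locale kset =
  fixes \<Omega> :: "'a::euclidean_space set" and \<Phi> :: "'a \<Rightarrow> 'a \<Rightarrow> real"
  assumes cpt: "compact \<Omega>"
    and cont: "continuous_on (\<Omega> \<times> \<Omega>) (\<lambda>(x, y). \<Phi> x y)"
    and sym: "\<forall>x\<in>\<Omega>. \<forall>y\<in>\<Omega>. \<Phi> x y = \<Phi> y x"
    and pd: "pd_kernel \<Omega> \<Phi>"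
begin

definition P0 :: "'a \<Rightarrow> 'a \<Rightarrow> real" where
  "P0 x y = (if x \<in> \<Omega> \<and> y \<in> \<Omega> then \<Phi> x y else 0)"

definition good :: "('a \<Rightarrow> real) \<Rightarrow> bool" where
  "good g \<longleftrightarrow> g \<in> borel_measurable lebesgue \<and> (\<exists>B. \<forall>x. \<bar>g x\<bar> \<le> B) \<and> (\<forall>x. x \<notin> \<Omega> \<longrightarrow> g x = 0)"

lemma Omega_borel: "\<Omega> \<in> sets borel"
  using cpt by (simp add: compact_imp_closed borel_closed)

lemma Omega_lborel: "\<Omega> \<in> sets lborel"
  using Omega_borel by simp

lemma Omega_leb: "\<Omega> \<in> sets lebesgue"
  using Omega_lborel by (rule sets_completionI_sets)

lemma Omega_fin: "emeasure lebesgue \<Omega> < \<infinity>"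
  using emeasure_compact_finite[OF cpt] Omega_lborel by simp

lemma OO_fin: "emeasure (lebesgue \<Otimes>\<^sub>M lebesgue) (\<Omega> \<times> \<Omega>) < \<infinity>"
  using Omega_fin Omega_leb by (simp add: leb.emeasure_pair_measure_Times ennreal_mult_less_top)

lemma P0_bound: "\<exists>M. \<forall>x y. \<bar>P0 x y\<bar> \<le> M"
proof -
  have "compact ((\<lambda>(x, y). \<Phi> x y) ` (\<Omega> \<times> \<Omega>))"
    by (intro compact_continuous_image cont compact_Times cpt)
  then obtain M where M: "\<forall>z\<in>(\<Omega> \<times> \<Omega>). norm ((\<lambda>(x, y). \<Phi> x y) z) \<le> M"
    using compact_imp_bounded bounded_iff by (metis image_eqI)
  have "\<bar>P0 x y\<bar> \<le> max M 0" for x y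
  proof (cases "x \<in> \<Omega> \<and> y \<in> \<Omega>")
    case True
    then have "\<bar>\<Phi> x y\<bar> \<le> M" using M by fastforce
    then show ?thesis using True unfolding P0_def by simp
  next
    case False
    then show ?thesis unfolding P0_def by auto
  qed
  then show ?thesis by blast
qed

lemma P0_meas2: "(\<lambda>(x, y). P0 x y) \<in> borel_measurable (lebesgue \<Otimes>\<^sub>M lebesgue)"
proof -
  have "(\<lambda>z. indicator (\<Omega> \<times> \<Omega>) z *\<^sub>R (\<lambda>(x, y). \<Phi> x y) z) \<in> borel_measurable borel"
    by (intro borel_measurable_continuous_on_indicator cont)
       (simp add: borel_closed closed_Times compact_imp_closed cpt)
  then have "(\<lambda>z. indicator (\<Omega> \<times> \<Omega>) z *\<^sub>R (\<lambda>(x, y). \<Phi> x y) z) \<in> borel_measurable (lebesgue \<Otimes>\<^sub>M lebesgue)"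
    by (rule borel_to_LL)
  moreover have "(\<lambda>z. indicator (\<Omega> \<times> \<Omega>) z *\<^sub>R (\<lambda>(x, y). \<Phi> x y) z) = (\<lambda>(x, y). P0 x y)"
    by (auto simp: P0_def indicator_def fun_eq_iff)
  ultimately show ?thesis by simp
qed

lemma P0_meas_fst: "(\<lambda>x. P0 x y) \<in> borel_measurable lebesgue"
proof -
  have "(\<lambda>x. (x, y)) \<in> lebesgue \<rightarrow>\<^sub>M (lebesgue \<Otimes>\<^sub>M lebesgue)"
    by (intro measurable_Pair measurable_ident_sets measurable_const) auto
  from measurable_compose[OF this P0_meas2] show ?thesis by simp
qed

lemma P0_meas_snd: "(\<lambda>y. P0 x y) \<in> borel_measurable lebesgue"
proof -
  have "(\<lambda>y. (x, y)) \<in> lebesgue \<rightarrow>\<^sub>M (lebesgue \<Otimes>\<^sub>M lebesgue)"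
    by (intro measurable_Pair measurable_ident_sets measurable_const) auto
  from measurable_compose[OF this P0_meas2] show ?thesis by simp
qed

lemma integrable1:
  fixes f :: "'a \<Rightarrow> real"
  assumes "f \<in> borel_measurable lebesgue" "\<And>x. \<bar>f x\<bar> \<le> B" "\<And>x. x \<notin> \<Omega> \<Longrightarrow> f x = 0"
  shows "integrable lebesgue f"
  by (rule integrableI_bounded_set[where A=\<Omega> and B=B]) (use assms Omega_leb Omega_fin in auto)

lemma integrable2:
  fixes f :: "'a \<times> 'a \<Rightarrow> real"
  assumes "f \<in> borel_measurable (lebesgue \<Otimes>\<^sub>M lebesgue)" "\<And>z. \<bar>f z\<bar> \<le> B"
    "\<And>x y. x \<notin> \<Omega> \<or> y \<notin> \<Omega> \<Longrightarrow> f (x, y) = 0"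
  shows "integrable (lebesgue \<Otimes>\<^sub>M lebesgue) f"
proof (rule integrableI_bounded_set[where A="\<Omega> \<times> \<Omega>" and B=B])
  show "\<Omega> \<times> \<Omega> \<in> sets (lebesgue \<Otimes>\<^sub>M lebesgue)" using Omega_leb by simp
next
  show "AE z in lebesgue \<Otimes>\<^sub>M lebesgue. z \<notin> \<Omega> \<times> \<Omega> \<longrightarrow> f z = 0"
    using assms(3) by (intro AE_I2) (auto simp: mem_Times_iff)
qed (use assms OO_fin in auto)

lemma prod_integral:
  fixes f h :: "'a \<Rightarrow> real"
  assumes "integrable (lebesgue \<Otimes>\<^sub>M lebesgue) (\<lambda>(x, y). f x * h y)"
  shows "(\<integral>(x, y). f x * h y \<partial>(lebesgue \<Otimes>\<^sub>M lebesgue)) = integral\<^sup>L lebesgue f * integral\<^sup>L lebesgue h"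
proof -
  have "(\<integral>(x, y). f x * h y \<partial>(lebesgue \<Otimes>\<^sub>M lebesgue)) = (\<integral>x. (\<integral>y. f x * h y \<partial>lebesgue) \<partial>lebesgue)"
    using leb_pair.integral_fst[OF assms] by simp
  also have "\<dots> = integral\<^sup>L lebesgue f * integral\<^sup>L lebesgue h"
    by simp
  finally show ?thesis .
qed

end


context kset begin

lemma net:
  assumes "\<delta> > 0"
  obtains n :: nat and ps :: "nat \<Rightarrow> 'a" and idx :: "'a \<Rightarrow> nat" where
    "\<And>k. k < n \<Longrightarrow> ps k \<in> \<Omega>"
    "\<And>x. x \<in> \<Omega> \<Longrightarrow> idx x < n \<and> dist (ps (idx x)) x < \<delta>"
    "\<And>k. {x\<in>\<Omega>. idx x = k} \<in> sets lebesgue"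
proof -
  obtain T where T: "T \<subseteq> \<Omega>" "finite T" "\<Omega> \<subseteq> (\<Union>c\<in>T. ball c \<delta>)"
    by (rule compactE_image[OF cpt, of \<Omega> "\<lambda>c. ball c \<delta>"]) (use assms in auto)
  obtain xs where xs: "set xs = T" using finite_list[OF T(2)] by blast
  define n where "n = length xs"
  define ps where "ps k = xs ! k" for k
  define idx where "idx x = (LEAST i. i < n \<and> dist (ps i) x < \<delta>)" for x
  show ?thesis
  proof
    show "ps k \<in> \<Omega>" if "k < n" for k using that T xs unfolding ps_def n_def by auto
  next
    fix x assume x: "x \<in> \<Omega>"
    then obtain c where "c \<in> T" "dist c x < \<delta>" using T by auto
    then obtain i where "i < n" "dist (ps i) x < \<delta>"
      using xs unfolding ps_def n_def by (metis in_set_conv_nth)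
    then show "idx x < n \<and> dist (ps (idx x)) x < \<delta>"
      unfolding idx_def by (metis (mono_tags, lifting) LeastI)
  next
    fix k
    have m: "(\<lambda>x. i < n \<and> dist (ps i) x < \<delta>) \<in> measurable lebesgue (count_space UNIV)" for i
    proof -
      have "{x \<in> space lebesgue. i < n \<and> dist (ps i) x < \<delta>} = (if i < n then ball (ps i) \<delta> else {})"
        by (auto simp: ball_def)
      moreover have "ball (ps i) \<delta> \<in> sets lebesgue"
        by (rule sets_completionI_sets) simp
      ultimately show ?thesis unfolding pred_def by simp
    qed
    have "idx \<in> measurable lebesgue (count_space UNIV)"
      unfolding idx_def by (rule measurable_Least[OF m])
    then have "Measurable.pred lebesgue (\<lambda>x. idx x = k)" by (rule pred_count_space_const1)
    then have "{x \<in> space lebesgue. idx x = k} \<in> sets lebesgue" unfolding pred_def .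
    then show "{x\<in>\<Omega>. idx x = k} \<in> sets lebesgue"
    proof -
      have "{x\<in>\<Omega>. idx x = k} = \<Omega> \<inter> {x \<in> space lebesgue. idx x = k}" by auto
      then show ?thesis using Omega_leb \<open>{x \<in> space lebesgue. idx x = k} \<in> sets lebesgue\<close> by simp
    qed
  qed
qed

lemma discrete_ineq:
  fixes G :: "nat \<Rightarrow> real" and ps :: "nat \<Rightarrow> 'a"
  assumes ps: "\<And>k. k < n \<Longrightarrow> ps k \<in> \<Omega>" and c: "fin_coeff \<Omega> c"
  shows "0 \<le> (\<Sum>k<n. \<Sum>l<n. G k * G l * \<Phi> (ps k) (ps l))
    + 2 * (\<Sum>y\<in>{y. c y \<noteq> 0}. c y * (\<Sum>k<n. G k * \<Phi> (ps k) y)) + kernel_norm2 \<Phi> c"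
proof -
  define Y where "Y = {y. c y \<noteq> 0}"
  have fY: "finite Y" and YO: "Y \<subseteq> \<Omega>" using c unfolding Y_def fin_coeff_def by auto
  define z where "z = case_sum ps (\<lambda>y. y)"
  define w where "w = case_sum G c"
  have zI: "z ` ({..<n} <+> Y) \<subseteq> \<Omega>" using ps YO unfolding z_def by auto
  have 0: "0 \<le> (\<Sum>i\<in>{..<n} <+> Y. \<Sum>j\<in>{..<n} <+> Y. w i * w j * \<Phi> (z i) (z j))"
    by (rule pd_general[OF pd _ zI]) (simp add: fY)
  have split: "(\<Sum>i\<in>{..<n} <+> Y. \<Sum>j\<in>{..<n} <+> Y. w i * w j * \<Phi> (z i) (z j))
     = (\<Sum>k<n. \<Sum>l<n. G k * G l * \<Phi> (ps k) (ps l)) + (\<Sum>k<n. \<Sum>y\<in>Y. G k * c y * \<Phi> (ps k) y)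
       + ((\<Sum>y\<in>Y. \<Sum>k<n. c y * G k * \<Phi> y (ps k)) + (\<Sum>y\<in>Y. \<Sum>y'\<in>Y. c y * c y' * \<Phi> y y'))"
    using fY by (simp add: sum.Plus sum.distrib z_def w_def)
  have C: "(\<Sum>y\<in>Y. \<Sum>k<n. c y * G k * \<Phi> y (ps k)) = (\<Sum>y\<in>Y. c y * (\<Sum>k<n. G k * \<Phi> (ps k) y))"
    using ps YO sym by (auto simp: sum_distrib_left mult.assoc intro!: sum.cong)
  have B: "(\<Sum>k<n. \<Sum>y\<in>Y. G k * c y * \<Phi> (ps k) y) = (\<Sum>y\<in>Y. c y * (\<Sum>k<n. G k * \<Phi> (ps k) y))"
    by (subst sum.swap) (auto simp: sum_distrib_left mult.assoc mult.left_commute intro!: sum.cong)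
  have D: "(\<Sum>y\<in>Y. \<Sum>y'\<in>Y. c y * c y' * \<Phi> y y') = kernel_norm2 \<Phi> c"
    unfolding kernel_norm2_def Y_def ..
  have "0 \<le> (\<Sum>k<n. \<Sum>l<n. G k * G l * \<Phi> (ps k) (ps l)) + 2 * (\<Sum>y\<in>Y. c y * (\<Sum>k<n. G k * \<Phi> (ps k) y)) + kernel_norm2 \<Phi> c"
    using 0 unfolding split B C D by simp
  then show ?thesis unfolding Y_def .
qed

end


context kset begin

lemma meas_prod:
  fixes a b :: "'a \<Rightarrow> real"
  assumes "a \<in> borel_measurable lebesgue" "b \<in> borel_measurable lebesgue"
  shows "(\<lambda>(x, y). a x * b y) \<in> borel_measurable (lebesgue \<Otimes>\<^sub>M lebesgue)"
proof -
  have "(\<lambda>z. a (fst z) * b (snd z)) \<in> borel_measurable (lebesgue \<Otimes>\<^sub>M lebesgue)"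
    by (intro borel_measurable_times measurable_compose[OF measurable_fst assms(1)]
        measurable_compose[OF measurable_snd assms(2)])
  then show ?thesis by (simp add: case_prod_beta')
qed

lemma int2:
  fixes a b :: "'a \<Rightarrow> real" and F :: "'a \<times> 'a \<Rightarrow> real"
  assumes a: "good a" and b: "good b" and F: "F \<in> borel_measurable (lebesgue \<Otimes>\<^sub>M lebesgue)"
    and Fb: "\<And>z. \<bar>F z\<bar> \<le> M"
  shows "integrable (lebesgue \<Otimes>\<^sub>M lebesgue) (\<lambda>z. (case z of (x, y) \<Rightarrow> a x * b y) * F z)"
proof -
  obtain A B where A: "\<And>x. \<bar>a x\<bar> \<le> A" and B: "\<And>x. \<bar>b x\<bar> \<le> B"
    using a b unfolding good_def by blast
  have A0: "0 \<le> A" using A[of undefined] by simp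
  have B0: "0 \<le> B" using B[of undefined] by simp
  show ?thesis
  proof (rule integrable2[where B="A * B * M"])
    show "(\<lambda>z. (case z of (x, y) \<Rightarrow> a x * b y) * F z) \<in> borel_measurable (lebesgue \<Otimes>\<^sub>M lebesgue)"
      using meas_prod[of a b] a b F unfolding good_def by (intro borel_measurable_times) auto
  next
    fix z :: "'a \<times> 'a"
    obtain x y where z: "z = (x, y)" by (cases z)
    have "\<bar>a x * b y * F z\<bar> = \<bar>a x\<bar> * \<bar>b y\<bar> * \<bar>F z\<bar>" by (simp add: abs_mult)
    also have "\<dots> \<le> A * B * M"
      by (intro mult_mono A B Fb) (use A0 B0 in auto)
    finally show "\<bar>(case z of (x, y) \<Rightarrow> a x * b y) * F z\<bar> \<le> A * B * M" by (simp add: z)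
  next
    fix x y :: 'a assume "x \<notin> \<Omega> \<or> y \<notin> \<Omega>"
    then show "(case (x, y) of (x, y) \<Rightarrow> a x * b y) * F (x, y) = 0"
      using a b unfolding good_def by auto
  qed
qed

lemma int1:
  fixes a h :: "'a \<Rightarrow> real"
  assumes a: "good a" and h: "h \<in> borel_measurable lebesgue" and hb: "\<And>x. \<bar>h x\<bar> \<le> M"
  shows "integrable lebesgue (\<lambda>x. a x * h x)"
proof -
  obtain A where A: "\<And>x. \<bar>a x\<bar> \<le> A" using a unfolding good_def by blast
  have A0: "0 \<le> A" using A[of undefined] by simp
  show ?thesis
  proof (rule integrable1[where B="A * M"])
    show "(\<lambda>x. a x * h x) \<in> borel_measurable lebesgue" using a h unfolding good_def by auto
    show "\<bar>a x * h x\<bar> \<le> A * M" for x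
      unfolding abs_mult by (intro mult_mono A hb) (use A0 in auto)
    show "x \<notin> \<Omega> \<Longrightarrow> a x * h x = 0" for x using a unfolding good_def by auto
  qed
qed

lemma good_mult:
  assumes "good a" "h \<in> borel_measurable lebesgue" "\<And>x. \<bar>h x\<bar> \<le> M"
  shows "good (\<lambda>x. a x * h x)"
proof -
  obtain A where A: "\<And>x. \<bar>a x\<bar> \<le> A" using assms unfolding good_def by blast
  have A0: "0 \<le> A" using A[of undefined] by simp
  have "\<bar>a x * h x\<bar> \<le> A * M" for x
    unfolding abs_mult by (intro mult_mono A assms(3)) (use A0 in auto)
  then show ?thesis using assms unfolding good_def by auto
qed

lemma good_abs: "good a \<Longrightarrow> good (\<lambda>x. \<bar>a x\<bar>)"
  unfolding good_def by (auto intro: borel_measurable_abs)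

end


context kset begin

definition Qf :: "('a \<Rightarrow> real) \<Rightarrow> real" where
  "Qf g = (\<integral>z. (case z of (x, y) \<Rightarrow> g x * g y) * (case z of (x, y) \<Rightarrow> P0 x y) \<partial>(lebesgue \<Otimes>\<^sub>M lebesgue))"

definition Tf :: "('a \<Rightarrow> real) \<Rightarrow> 'a \<Rightarrow> real" where
  "Tf g y = (\<integral>x. g x * P0 x y \<partial>lebesgue)"

definition C1 :: "('a \<Rightarrow> real) \<Rightarrow> real" where
  "C1 g = (\<integral>z. (case z of (x, y) \<Rightarrow> \<bar>g x\<bar> * \<bar>g y\<bar>) * 1 \<partial>(lebesgue \<Otimes>\<^sub>M lebesgue))"

definition C2 :: "('a \<Rightarrow> real) \<Rightarrow> real" where
  "C2 g = (\<integral>x. \<bar>g x\<bar> * 1 \<partial>lebesgue)"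

lemma int2':
  assumes a: "good a" and b: "good b"
  shows "integrable (lebesgue \<Otimes>\<^sub>M lebesgue) (\<lambda>z. (case z of (x, y) \<Rightarrow> a x * b y) * 1)"
  by (rule int2[OF a b, where M=1]) auto

lemma approx_eps:
  assumes g: "good g" and c: "fin_coeff \<Omega> c" and e: "\<epsilon> > 0"
  shows "0 \<le> Qf g + 2 * (\<Sum>y\<in>{y. c y \<noteq> 0}. c y * Tf g y) + kernel_norm2 \<Phi> c
     + \<epsilon> * (C1 g + 2 * (\<Sum>y\<in>{y. c y \<noteq> 0}. \<bar>c y\<bar>) * C2 g)"
proof -
  define Y where "Y = {y. c y \<noteq> 0}"
  have YO: "Y \<subseteq> \<Omega>" and fY: "finite Y" using c unfolding Y_def fin_coeff_def by auto
  have uc: "uniformly_continuous_on (\<Omega> \<times> \<Omega>) (\<lambda>(x, y). \<Phi> x y)"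
    by (rule compact_uniformly_continuous[OF cont compact_Times[OF cpt cpt]])
  then obtain \<delta> where d0: "\<delta> > 0" and H: "\<forall>p\<in>\<Omega> \<times> \<Omega>. \<forall>p'\<in>\<Omega> \<times> \<Omega>. dist p' p < \<delta> \<longrightarrow>
      dist ((\<lambda>(x, y). \<Phi> x y) p') ((\<lambda>(x, y). \<Phi> x y) p) < \<epsilon>"
    unfolding uniformly_continuous_on_def using e by blast
  have d2: "\<delta> / 2 > 0" using d0 by simp
  obtain n :: nat and ps :: "nat \<Rightarrow> 'a" and idx :: "'a \<Rightarrow> nat" where ps: "\<And>k. k < n \<Longrightarrow> ps k \<in> \<Omega>"
    and idx: "\<And>x. x \<in> \<Omega> \<Longrightarrow> idx x < n \<and> dist (ps (idx x)) x < \<delta> / 2"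
    and idxm: "\<And>k. {x\<in>\<Omega>. idx x = k} \<in> sets lebesgue"
    using net[OF d2] by blast
  define chi :: "nat \<Rightarrow> 'a \<Rightarrow> real" where "chi k x = indicator {x\<in>\<Omega>. idx x = k} x" for k x
  define r where "r x = ps (idx x)" for x
  have r: "r x \<in> \<Omega> \<and> dist (r x) x < \<delta> / 2" if "x \<in> \<Omega>" for x
    using idx[OF that] ps unfolding r_def by auto
  have close2: "\<bar>P0 x y - \<Phi> (r x) (r y)\<bar> < \<epsilon>" if "x \<in> \<Omega>" "y \<in> \<Omega>" for x y
  proof -
    have "dist (r x, r y) (x, y) \<le> dist (r x) x + dist (r y) y"
      unfolding dist_Pair_Pair by (rule sqrt_sum_squares_le_sum) auto
    also have "\<dots> < \<delta>" using r[OF that(1)] r[OF that(2)] by simp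
    moreover have "(x, y) \<in> \<Omega> \<times> \<Omega>" "(r x, r y) \<in> \<Omega> \<times> \<Omega>" using r that by auto
    ultimately have "dist (\<Phi> (r x) (r y)) (\<Phi> x y) < \<epsilon>"
      using H by fastforce
    then show ?thesis using that unfolding P0_def dist_real_def by (simp add: abs_minus_commute)
  qed
  have close1: "\<bar>P0 x y - \<Phi> (r x) y\<bar> < \<epsilon>" if "x \<in> \<Omega>" "y \<in> \<Omega>" for x y
  proof -
    have "dist (r x, y) (x, y) = dist (r x) x" unfolding dist_Pair_Pair by simp
    also have "\<dots> < \<delta>" using r[OF that(1)] zero_le_dist[of "r x" x] by linarith
    moreover have "(x, y) \<in> \<Omega> \<times> \<Omega>" "(r x, y) \<in> \<Omega> \<times> \<Omega>" using r that by auto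
    ultimately have "dist (\<Phi> (r x) y) (\<Phi> x y) < \<epsilon>"
      using H by fastforce
    then show ?thesis using that unfolding P0_def dist_real_def by (simp add: abs_minus_commute)
  qed
  have sumchi: "(\<Sum>k<n. chi k x * F k) = F (idx x)" if "x \<in> \<Omega>" for x and F :: "nat \<Rightarrow> real"
  proof -
    have "(\<Sum>k<n. chi k x * F k) = (\<Sum>k<n. if idx x = k then F k else 0)"
      using that by (intro sum.cong) (auto simp: chi_def)
    also have "\<dots> = F (idx x)" using idx[OF that] by (simp add: sum.delta)
    finally show ?thesis .
  qed
  have chim: "chi k \<in> borel_measurable lebesgue" for k
    unfolding chi_def[abs_def] using idxm by (intro borel_measurable_indicator) auto
  have chib: "\<bar>chi k x\<bar> \<le> 1" for k x unfolding chi_def by (simp add: indicator_def)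
  have gk: "good (\<lambda>x. g x * chi k x)" for k by (rule good_mult[OF g chim chib])
  define G where "G k = (\<integral>x. g x * chi k x \<partial>lebesgue)" for k
  define S where "S y = (\<Sum>k<n. G k * \<Phi> (ps k) y)" for y
  define A where "A = (\<Sum>k<n. \<Sum>l<n. G k * G l * \<Phi> (ps k) (ps l))"
  have D: "0 \<le> A + 2 * (\<Sum>y\<in>Y. c y * S y) + kernel_norm2 \<Phi> c"
    unfolding A_def S_def Y_def by (rule discrete_ineq[OF ps c])
  obtain MP where MP: "\<And>x y. \<bar>P0 x y\<bar> \<le> MP" using P0_bound by blast
  have intgk: "integrable lebesgue (\<lambda>x. g x * chi k x)" for k
    by (rule int1[OF g chim chib])
  have intC2: "integrable lebesgue (\<lambda>x. \<bar>g x\<bar> * 1)"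
    by (rule int1[OF good_abs[OF g], where M=1]) auto
  have E2: "\<bar>Tf g y - S y\<bar> \<le> \<epsilon> * C2 g" if y: "y \<in> \<Omega>" for y
  proof -
    have intk: "integrable lebesgue (\<lambda>x. g x * chi k x * \<Phi> (ps k) y)" for k
      using intgk[of k] by simp
    have Sy: "S y = (\<integral>x. (\<Sum>k<n. g x * chi k x * \<Phi> (ps k) y) \<partial>lebesgue)"
    proof -
      have "(\<integral>x. (\<Sum>k<n. g x * chi k x * \<Phi> (ps k) y) \<partial>lebesgue) = (\<Sum>k<n. \<integral>x. g x * chi k x * \<Phi> (ps k) y \<partial>lebesgue)"
        by (rule Bochner_Integration.integral_sum) (rule intk)
      then show ?thesis unfolding S_def G_def by simp
    qed
    have intS: "integrable lebesgue (\<lambda>x. \<Sum>k<n. g x * chi k x * \<Phi> (ps k) y)"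
      using intk by auto
    have intT: "integrable lebesgue (\<lambda>x. g x * P0 x y)"
      by (rule int1[OF g P0_meas_fst MP])
    have "Tf g y - S y = (\<integral>x. g x * P0 x y - (\<Sum>k<n. g x * chi k x * \<Phi> (ps k) y) \<partial>lebesgue)"
      unfolding Tf_def Sy using intT intS by simp
    also have "\<bar>\<dots>\<bar> \<le> (\<integral>x. \<epsilon> * (\<bar>g x\<bar> * 1) \<partial>lebesgue)"
    proof (rule integral_abs_bound_integral)
      show "integrable lebesgue (\<lambda>x. g x * P0 x y - (\<Sum>k<n. g x * chi k x * \<Phi> (ps k) y))"
        using intT intS by auto
      show "integrable lebesgue (\<lambda>x. \<epsilon> * (\<bar>g x\<bar> * 1))" using intC2 by auto
    next
      fix x :: 'a
      show "\<bar>g x * P0 x y - (\<Sum>k<n. g x * chi k x * \<Phi> (ps k) y)\<bar> \<le> \<epsilon> * (\<bar>g x\<bar> * 1)"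
      proof (cases "x \<in> \<Omega>")
        case True
        have "(\<Sum>k<n. g x * chi k x * \<Phi> (ps k) y) = g x * (\<Sum>k<n. chi k x * \<Phi> (ps k) y)"
          by (simp add: sum_distrib_left mult.assoc)
        also have "\<dots> = g x * \<Phi> (r x) y" using sumchi[OF True] by (simp add: r_def)
        finally have "\<bar>g x * P0 x y - (\<Sum>k<n. g x * chi k x * \<Phi> (ps k) y)\<bar> = \<bar>g x\<bar> * \<bar>P0 x y - \<Phi> (r x) y\<bar>"
          by (simp add: abs_mult[symmetric] algebra_simps)
        also have "\<dots> \<le> \<bar>g x\<bar> * \<epsilon>"
          using close1[OF True y] by (intro mult_left_mono) auto
        finally show ?thesis by (simp add: mult.commute)
      next
        case False
        then have "g x = 0" using g unfolding good_def by auto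
        then show ?thesis by simp
      qed
    qed
    also have "\<dots> = \<epsilon> * C2 g" unfolding C2_def by simp
    finally show ?thesis .
  qed
  define Psi where "Psi z = (\<Sum>k<n. \<Sum>l<n. (case z of (x, y) \<Rightarrow> chi k x * chi l y) * \<Phi> (ps k) (ps l))" for z
  define MPsi where "MPsi = (\<Sum>k<n. \<Sum>l<n. \<bar>\<Phi> (ps k) (ps l)\<bar>)"
  have Psim: "Psi \<in> borel_measurable (lebesgue \<Otimes>\<^sub>M lebesgue)"
    unfolding Psi_def[abs_def]
    by (intro borel_measurable_sum borel_measurable_times meas_prod chim borel_measurable_const)
  have Psib: "\<bar>Psi z\<bar> \<le> MPsi" for z
  proof -
    have "\<bar>Psi z\<bar> \<le> (\<Sum>k<n. \<bar>\<Sum>l<n. (case z of (x, y) \<Rightarrow> chi k x * chi l y) * \<Phi> (ps k) (ps l)\<bar>)"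
      unfolding Psi_def by (rule sum_abs)
    also have "\<dots> \<le> (\<Sum>k<n. \<Sum>l<n. \<bar>(case z of (x, y) \<Rightarrow> chi k x * chi l y) * \<Phi> (ps k) (ps l)\<bar>)"
      by (intro sum_mono sum_abs)
    also have "\<dots> \<le> MPsi" unfolding MPsi_def
    proof (intro sum_mono)
      fix k l
      have "\<bar>(case z of (x, y) \<Rightarrow> chi k x * chi l y)\<bar> \<le> 1"
        using chib by (cases z) (auto simp: abs_mult intro: mult_le_one)
      then show "\<bar>(case z of (x, y) \<Rightarrow> chi k x * chi l y) * \<Phi> (ps k) (ps l)\<bar> \<le> \<bar>\<Phi> (ps k) (ps l)\<bar>"
        unfolding abs_mult by (intro mult_left_le_one_le) auto
    qed
    finally show ?thesis .
  qed
  have intPsi: "integrable (lebesgue \<Otimes>\<^sub>M lebesgue) (\<lambda>z. (case z of (x, y) \<Rightarrow> g x * g y) * Psi z)"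
    by (rule int2[OF g g Psim Psib])
  have intQ: "integrable (lebesgue \<Otimes>\<^sub>M lebesgue) (\<lambda>z. (case z of (x, y) \<Rightarrow> g x * g y) * (case z of (x, y) \<Rightarrow> P0 x y))"
    by (rule int2[OF g g P0_meas2, where M=MP]) (auto simp: MP)
  have intkl: "integrable (lebesgue \<Otimes>\<^sub>M lebesgue) (\<lambda>z. (case z of (x, y) \<Rightarrow> (g x * chi k x) * (g y * chi l y)) * \<Phi> (ps k) (ps l))" for k l
    using int2'[OF gk[of k] gk[of l]] by simp
  have AP: "A = (\<integral>z. (case z of (x, y) \<Rightarrow> g x * g y) * Psi z \<partial>(lebesgue \<Otimes>\<^sub>M lebesgue))"
  proof -
    have pw: "(case z of (x, y) \<Rightarrow> g x * g y) * Psi z =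
      (\<Sum>k<n. \<Sum>l<n. (case z of (x, y) \<Rightarrow> (g x * chi k x) * (g y * chi l y)) * \<Phi> (ps k) (ps l))" for z
      unfolding Psi_def by (cases z) (simp add: sum_distrib_left algebra_simps)
    have "(\<integral>z. (case z of (x, y) \<Rightarrow> g x * g y) * Psi z \<partial>(lebesgue \<Otimes>\<^sub>M lebesgue))
       = (\<integral>z. (\<Sum>k<n. \<Sum>l<n. (case z of (x, y) \<Rightarrow> (g x * chi k x) * (g y * chi l y)) * \<Phi> (ps k) (ps l)) \<partial>(lebesgue \<Otimes>\<^sub>M lebesgue))"
      unfolding pw ..
    also have "\<dots> = (\<Sum>k<n. \<integral>z. (\<Sum>l<n. (case z of (x, y) \<Rightarrow> (g x * chi k x) * (g y * chi l y)) * \<Phi> (ps k) (ps l)) \<partial>(lebesgue \<Otimes>\<^sub>M lebesgue))"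
      by (rule Bochner_Integration.integral_sum) (rule Bochner_Integration.integrable_sum, rule intkl)
    also have "\<dots> = (\<Sum>k<n. \<Sum>l<n. \<integral>z. (case z of (x, y) \<Rightarrow> (g x * chi k x) * (g y * chi l y)) * \<Phi> (ps k) (ps l) \<partial>(lebesgue \<Otimes>\<^sub>M lebesgue))"
      by (intro sum.cong refl Bochner_Integration.integral_sum intkl)
    also have "\<dots> = A" unfolding A_def
    proof (intro sum.cong refl)
      fix k l
      have "integrable (lebesgue \<Otimes>\<^sub>M lebesgue) (\<lambda>(x, y). (g x * chi k x) * (g y * chi l y))"
        using int2'[OF gk[of k] gk[of l]] by (simp add: case_prod_beta')
      from prod_integral[OF this]
      show "(\<integral>z. (case z of (x, y) \<Rightarrow> (g x * chi k x) * (g y * chi l y)) * \<Phi> (ps k) (ps l) \<partial>(lebesgue \<Otimes>\<^sub>M lebesgue))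
          = G k * G l * \<Phi> (ps k) (ps l)"
        unfolding G_def by simp
    qed
    finally show ?thesis by simp
  qed
  have E1: "A - \<epsilon> * C1 g \<le> Qf g"
  proof -
    have "Qf g - A = (\<integral>z. (case z of (x, y) \<Rightarrow> g x * g y) * ((case z of (x, y) \<Rightarrow> P0 x y) - Psi z) \<partial>(lebesgue \<Otimes>\<^sub>M lebesgue))"
      unfolding Qf_def AP using intQ intPsi by (simp add: right_diff_distrib)
    also have "\<bar>\<dots>\<bar> \<le> (\<integral>z. \<epsilon> * ((case z of (x, y) \<Rightarrow> \<bar>g x\<bar> * \<bar>g y\<bar>) * 1) \<partial>(lebesgue \<Otimes>\<^sub>M lebesgue))"
    proof (rule integral_abs_bound_integral)
      show "integrable (lebesgue \<Otimes>\<^sub>M lebesgue) (\<lambda>z. (case z of (x, y) \<Rightarrow> g x * g y) * ((case z of (x, y) \<Rightarrow> P0 x y) - Psi z))"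
        using intQ intPsi by (simp add: right_diff_distrib)
      show "integrable (lebesgue \<Otimes>\<^sub>M lebesgue) (\<lambda>z. \<epsilon> * ((case z of (x, y) \<Rightarrow> \<bar>g x\<bar> * \<bar>g y\<bar>) * 1))"
        using int2'[OF good_abs[OF g] good_abs[OF g]] by simp
    next
      fix z :: "'a \<times> 'a"
      obtain x y where z: "z = (x, y)" by (cases z)
      show "\<bar>(case z of (x, y) \<Rightarrow> g x * g y) * ((case z of (x, y) \<Rightarrow> P0 x y) - Psi z)\<bar>
          \<le> \<epsilon> * ((case z of (x, y) \<Rightarrow> \<bar>g x\<bar> * \<bar>g y\<bar>) * 1)"
      proof (cases "x \<in> \<Omega> \<and> y \<in> \<Omega>")
        case True
        have "Psi z = (\<Sum>k<n. chi k x * (\<Sum>l<n. chi l y * \<Phi> (ps k) (ps l)))"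
          unfolding Psi_def z by (simp add: sum_distrib_left mult.assoc)
        also have "\<dots> = (\<Sum>k<n. chi k x * \<Phi> (ps k) (r y))"
          using sumchi[of y] True by (simp add: r_def)
        also have "\<dots> = \<Phi> (r x) (r y)"
          using sumchi[of x "\<lambda>k. \<Phi> (ps k) (r y)"] True by (simp add: r_def)
        finally have "\<bar>(case z of (x, y) \<Rightarrow> g x * g y) * ((case z of (x, y) \<Rightarrow> P0 x y) - Psi z)\<bar>
            = (\<bar>g x\<bar> * \<bar>g y\<bar>) * \<bar>P0 x y - \<Phi> (r x) (r y)\<bar>"
          unfolding z by (simp add: abs_mult)
        also have "\<dots> \<le> (\<bar>g x\<bar> * \<bar>g y\<bar>) * \<epsilon>"
          using close2[of x y] True by (intro mult_left_mono) auto
        finally show ?thesis by (simp add: z mult.commute)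
      next
        case False
        then have "g x * g y = 0" using g unfolding good_def by auto
        then show ?thesis by (auto simp: z abs_mult)
      qed
    qed
    also have "\<dots> = \<epsilon> * C1 g" unfolding C1_def by simp
    finally show ?thesis by linarith
  qed
  have E3: "(\<Sum>y\<in>Y. c y * S y) - \<epsilon> * C2 g * (\<Sum>y\<in>Y. \<bar>c y\<bar>) \<le> (\<Sum>y\<in>Y. c y * Tf g y)"
  proof -
    have "(\<Sum>y\<in>Y. c y * S y) - (\<Sum>y\<in>Y. c y * Tf g y) = (\<Sum>y\<in>Y. c y * (S y - Tf g y))"
      by (simp add: sum_subtractf algebra_simps)
    also have "\<dots> \<le> (\<Sum>y\<in>Y. \<bar>c y\<bar> * (\<epsilon> * C2 g))"
    proof (rule sum_mono)
      fix y assume "y \<in> Y"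
      then have "\<bar>S y - Tf g y\<bar> \<le> \<epsilon> * C2 g" using E2 YO by (auto simp: abs_minus_commute)
      have "c y * (S y - Tf g y) \<le> \<bar>c y\<bar> * \<bar>S y - Tf g y\<bar>"
        by (metis abs_ge_self abs_mult)
      moreover from \<open>\<bar>S y - Tf g y\<bar> \<le> \<epsilon> * C2 g\<close> have " \<bar>c y\<bar> * \<bar>S y - Tf g y\<bar> \<le> \<bar>c y\<bar> * (\<epsilon> * C2 g)"
        by (intro mult_left_mono) auto
      ultimately show "c y * (S y - Tf g y) \<le> \<bar>c y\<bar> * (\<epsilon> * C2 g)" by linarith
    qed
    also have "\<dots> = \<epsilon> * C2 g * (\<Sum>y\<in>Y. \<bar>c y\<bar>)" by (simp add: sum_distrib_left mult.commute)
    finally show ?thesis by linarith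
  qed
  show ?thesis using D E1 E3 unfolding Y_def[symmetric] by (simp add: algebra_simps)
qed

lemma C1_nonneg: "0 \<le> C1 g"
  unfolding C1_def by (intro integral_nonneg_AE AE_I2) (auto split: prod.splits)

lemma C2_nonneg: "0 \<le> C2 g"
  unfolding C2_def by (intro integral_nonneg_AE AE_I2) auto

lemma lemmaA:
  assumes g: "good g" and c: "fin_coeff \<Omega> c"
  shows "0 \<le> Qf g + 2 * (\<Sum>y\<in>{y. c y \<noteq> 0}. c y * Tf g y) + kernel_norm2 \<Phi> c"
proof (rule ccontr)
  define L where "L = Qf g + 2 * (\<Sum>y\<in>{y. c y \<noteq> 0}. c y * Tf g y) + kernel_norm2 \<Phi> c"
  define K where "K = C1 g + 2 * (\<Sum>y\<in>{y. c y \<noteq> 0}. \<bar>c y\<bar>) * C2 g"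
  have K0: "0 \<le> K" unfolding K_def using C1_nonneg C2_nonneg by (simp add: sum_nonneg)
  assume "\<not> ?thesis"
  then have L0: "L < 0" unfolding L_def by simp
  define e where "e = - L / (2 * (K + 1))"
  have e0: "e > 0" unfolding e_def using L0 K0 by (intro divide_pos_pos) auto
  have "0 \<le> L + e * K" using approx_eps[OF g c e0] unfolding L_def K_def by simp
  moreover have "e * K < - L"
  proof -
    have "e * K \<le> e * (K + 1)" using e0 by simp
    also have "\<dots> = - L / 2" unfolding e_def using K0 by (simp add: field_simps)
    also have "\<dots> < - L" using L0 by simp
    finally show ?thesis .
  qed
  ultimately show False by linarith
qed

end


context kset begin

lemma Q_nonneg: assumes g: "good g" shows "0 \<le> Qf g"
proof -
  have "fin_coeff \<Omega> (\<lambda>_. 0)" unfolding fin_coeff_def by simp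
  from lemmaA[OF g this] show ?thesis by (simp add: kernel_norm2_def)
qed

lemma T_zero:
  assumes g: "good g" and Q0: "Qf g = 0" and y: "y \<in> \<Omega>"
  shows "Tf g y = 0"
proof (rule ccontr)
  define T where "T = Tf g y"
  assume "Tf g y \<noteq> 0"
  then have T0: "T \<noteq> 0" unfolding T_def .
  define a where "a = \<bar>\<Phi> y y\<bar> + 1"
  have a0: "a > 0" unfolding a_def by simp
  define t where "t = - T / a"
  have t0: "t \<noteq> 0" unfolding t_def using T0 a0 by simp
  define c where "c z = (if z = y then t else 0)" for z
  have supp: "{z. c z \<noteq> 0} = {y}" unfolding c_def using t0 by auto
  have fc: "fin_coeff \<Omega> c" unfolding fin_coeff_def supp using y by simp
  have "0 \<le> 2 * (t * T) + t * t * \<Phi> y y"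
    using lemmaA[OF g fc] unfolding Q0 supp kernel_norm2_def T_def by (simp add: c_def)
  then have "0 \<le> a * a * (2 * (t * T) + t * t * \<Phi> y y)" using a0 by simp
  also have "a * a * (2 * (t * T) + t * t * \<Phi> y y) = - 2 * a * (T * T) + T * T * \<Phi> y y"
    unfolding t_def using a0 by (simp add: field_simps)
  also have "\<dots> \<le> - 2 * a * (T * T) + T * T * (a - 1)"
    unfolding a_def by (intro add_left_mono mult_left_mono) auto
  also have "\<dots> = - (T * T) * (a + 1)" by (simp add: algebra_simps)
  also have "\<dots> < 0"
  proof -
    have "0 < T * T" using T0 by (auto simp: zero_less_mult_iff linorder_neq_iff)
    then show ?thesis using a0 by (simp add: mult_pos_pos)
  qed
  finally show False by simp
qed

lemma ortho:
  fixes s :: "nat \<Rightarrow> 'a \<Rightarrow> real"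
  assumes g: "good g" and Tz: "\<forall>y\<in>\<Omega>. Tf g y = 0" and s: "\<forall>m. fin_coeff \<Omega> (s m)"
    and cau: "\<forall>\<epsilon>>0. \<exists>N. \<forall>m\<ge>N. \<forall>k\<ge>N. kernel_norm2 \<Phi> (\<lambda>x. s m x - s k x) < \<epsilon>"
    and lim: "\<forall>x\<in>\<Omega>. (\<lambda>m. kernel_fun \<Phi> (s m) x) \<longlonglongrightarrow> f x"
  shows "integrable lebesgue (\<lambda>x. g x * f x) \<and> (\<integral>x. g x * f x \<partial>lebesgue) = 0"
proof -
  obtain R where R: "\<And>m. kernel_norm2 \<Phi> (s m) \<le> R" using cauchy_norm_bounded[OF pd s cau] by blast
  obtain MP where MP: "\<And>x y. \<bar>P0 x y\<bar> \<le> MP" using P0_bound by blast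
  define h where "h m x = (\<Sum>y\<in>{y. s m y \<noteq> 0}. s m y * (g x * P0 x y))" for m x
  have hg: "h m x = g x * kernel_fun \<Phi> (s m) x" for m x
  proof (cases "x \<in> \<Omega>")
    case True
    have "h m x = (\<Sum>y\<in>{y. s m y \<noteq> 0}. g x * (s m y * \<Phi> x y))"
      unfolding h_def using s True
      by (intro sum.cong refl) (auto simp: P0_def fin_coeff_def)
    then show ?thesis unfolding kernel_fun_def by (simp add: sum_distrib_left)
  next
    case False
    then have "g x = 0" using g unfolding good_def by auto
    then show ?thesis unfolding h_def by simp
  qed
  have intP: "integrable lebesgue (\<lambda>x. g x * P0 x y)" for y by (rule int1[OF g P0_meas_fst MP])
  have hm: "h m \<in> borel_measurable lebesgue" for m
    unfolding h_def[abs_def] using g P0_meas_fst unfolding good_def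
    by (intro borel_measurable_sum borel_measurable_times) auto
  have hint: "(\<integral>x. h m x \<partial>lebesgue) = 0" for m
  proof -
    have "(\<integral>x. h m x \<partial>lebesgue) = (\<Sum>y\<in>{y. s m y \<noteq> 0}. \<integral>x. s m y * (g x * P0 x y) \<partial>lebesgue)"
      unfolding h_def by (rule Bochner_Integration.integral_sum) (use intP in auto)
    also have "\<dots> = (\<Sum>y\<in>{y. s m y \<noteq> 0}. s m y * Tf g y)" unfolding Tf_def by simp
    also have "\<dots> = 0" using Tz s unfolding fin_coeff_def by (intro sum.neutral) auto
    finally show ?thesis .
  qed
  have hlim: "(\<lambda>m. h m x) \<longlonglongrightarrow> g x * f x" for x
  proof (cases "x \<in> \<Omega>")
    case True
    then show ?thesis unfolding hg using lim by (intro tendsto_mult_left) auto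
  next
    case False
    then have "g x = 0" using g unfolding good_def by auto
    then show ?thesis unfolding hg by simp
  qed
  define C where "C = (R + MP) / 2"
  have hb: "norm (h m x) \<le> \<bar>g x\<bar> * C" for m x
  proof (cases "x \<in> \<Omega>")
    case True
    have "2 * \<bar>kernel_fun \<Phi> (s m) x\<bar> \<le> kernel_norm2 \<Phi> (s m) + \<Phi> x x"
      by (rule kf_bound[OF pd sym _ True]) (use s in auto)
    moreover have "\<Phi> x x \<le> MP" using MP[of x x] True by (simp add: P0_def)
    ultimately have "2 * \<bar>kernel_fun \<Phi> (s m) x\<bar> \<le> R + MP" using R[of m] by linarith
    then have "\<bar>kernel_fun \<Phi> (s m) x\<bar> \<le> C" unfolding C_def by (simp add: field_simps)
    then show ?thesis unfolding hg by (simp add: abs_mult mult_left_mono)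
  next
    case False
    then have "g x = 0" using g unfolding good_def by auto
    then show ?thesis unfolding hg by simp
  qed
  have wint: "integrable lebesgue (\<lambda>x. \<bar>g x\<bar> * C)"
    by (rule int1[OF good_abs[OF g], where M="\<bar>C\<bar>"]) auto
  have Fm: "(\<lambda>x. g x * f x) \<in> borel_measurable lebesgue"
    by (rule borel_measurable_LIMSEQ_real[OF hlim hm])
  have "integrable lebesgue (\<lambda>x. g x * f x)"
    by (rule integrable_dominated_convergence[OF Fm hm wint]) (use hlim hb in \<open>auto intro!: AE_I2\<close>)
  moreover have "(\<lambda>m. \<integral>x. h m x \<partial>lebesgue) \<longlonglongrightarrow> (\<integral>x. g x * f x \<partial>lebesgue)"
    by (rule integral_dominated_convergence[OF Fm hm wint]) (use hlim hb in \<open>auto intro!: AE_I2\<close>)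
  then have "(\<integral>x. g x * f x \<partial>lebesgue) = 0"
    unfolding hint by (simp add: LIMSEQ_const_iff)
  ultimately show ?thesis by simp
qed

lemma zero_ae:
  assumes g: "good g" and Q0: "Qf g = 0" and dense: "dense_in_L2 \<Omega> (native_space \<Omega> \<Phi>)"
  shows "AE x in lebesgue. x \<in> \<Omega> \<longrightarrow> g x = 0"
proof -
  have Tz: "\<forall>y\<in>\<Omega>. Tf g y = 0" using T_zero[OF g Q0] by blast
  obtain B where B: "\<And>x. \<bar>g x\<bar> \<le> B" using g unfolding good_def by blast
  have gm: "g \<in> borel_measurable lebesgue" using g unfolding good_def by blast
  have gg: "integrable lebesgue (\<lambda>x. g x * g x)" by (rule int1[OF g gm B])
  have gL2: "(\<integral>\<^sup>+x\<in>\<Omega>. ennreal ((g x)\<^sup>2) \<partial>lebesgue) < \<infinity>"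
  proof -
    have "(\<integral>\<^sup>+x\<in>\<Omega>. ennreal ((g x)\<^sup>2) \<partial>lebesgue) \<le> (\<integral>\<^sup>+x. ennreal (norm (g x * g x)) \<partial>lebesgue)"
      by (intro nn_integral_mono) (auto simp: indicator_def power2_eq_square)
    also have "\<dots> < \<infinity>" using gg by (simp add: integrable_iff_bounded)
    finally show ?thesis .
  qed
  have small: "(\<integral>x. g x * g x \<partial>lebesgue) < \<epsilon>" if e: "\<epsilon> > 0" for \<epsilon>
  proof -
    obtain f where f: "f \<in> native_space \<Omega> \<Phi>"
      and fe: "(\<integral>\<^sup>+x\<in>\<Omega>. ennreal ((g x - f x)\<^sup>2) \<partial>lebesgue) < ennreal \<epsilon>"
      using dense gm gL2 e unfolding dense_in_L2_def by blast
    then obtain s where s: "\<forall>m. fin_coeff \<Omega> (s m)"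
      and cau: "\<forall>\<epsilon>>0. \<exists>N. \<forall>m\<ge>N. \<forall>k\<ge>N. kernel_norm2 \<Phi> (\<lambda>x. s m x - s k x) < \<epsilon>"
      and lim: "\<forall>x\<in>\<Omega>. (\<lambda>m. kernel_fun \<Phi> (s m) x) \<longlonglongrightarrow> f x"
      unfolding native_space_def by blast
    have gf: "integrable lebesgue (\<lambda>x. g x * f x)" "(\<integral>x. g x * f x \<partial>lebesgue) = 0"
      using ortho[OF g Tz s cau lim] by auto
    define H where "H x = indicator \<Omega> x * (g x - f x)\<^sup>2" for x
    define k where "k m x = (\<Sum>y\<in>{y. s m y \<noteq> 0}. s m y * P0 x y)" for m x
    have km: "k m \<in> borel_measurable lebesgue" for m
      unfolding k_def[abs_def] using P0_meas_fst by (intro borel_measurable_sum borel_measurable_times) auto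
    have Hlim: "(\<lambda>m. indicator \<Omega> x * (g x - k m x)\<^sup>2) \<longlonglongrightarrow> H x" for x
    proof (cases "x \<in> \<Omega>")
      case True
      have "k m x = kernel_fun \<Phi> (s m) x" for m
        unfolding k_def kernel_fun_def using s True
        by (intro sum.cong refl) (auto simp: P0_def fin_coeff_def)
      then have "(\<lambda>m. k m x) \<longlonglongrightarrow> f x" using lim True by simp
      then show ?thesis unfolding H_def
        by (intro tendsto_mult_left tendsto_power tendsto_diff tendsto_const)
    qed (simp add: H_def)
    have Hm: "H \<in> borel_measurable lebesgue"
    proof (rule borel_measurable_LIMSEQ_real[where u="\<lambda>m x. indicator \<Omega> x * (g x - k m x)\<^sup>2"])
      show "(\<lambda>m. indicator \<Omega> x * (g x - k m x)\<^sup>2) \<longlonglongrightarrow> H x" for x by (rule Hlim)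
      show "(\<lambda>x. indicator \<Omega> x * (g x - k m x)\<^sup>2) \<in> borel_measurable lebesgue" for m
        by (intro borel_measurable_times borel_measurable_indicator[OF Omega_leb]
              borel_measurable_power borel_measurable_diff gm km)
    qed
    have Hnn: "(\<integral>\<^sup>+x. ennreal (H x) \<partial>lebesgue) = (\<integral>\<^sup>+x\<in>\<Omega>. ennreal ((g x - f x)\<^sup>2) \<partial>lebesgue)"
      by (intro nn_integral_cong) (auto simp: H_def indicator_def)
    have Hint: "integrable lebesgue H"
    proof (rule integrableI_nonneg[OF Hm])
      show "AE x in lebesgue. 0 \<le> H x" by (auto simp: H_def intro!: AE_I2)
      show "(\<integral>\<^sup>+x. ennreal (H x) \<partial>lebesgue) < \<infinity>"
        unfolding Hnn using order.strict_trans[OF fe ennreal_less_top] by (simp add: infinity_ennreal_def)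
    qed
    have Hnn0: "AE x in lebesgue. 0 \<le> H x" by (auto simp: H_def intro!: AE_I2)
    have "(\<integral>\<^sup>+x. ennreal (H x) \<partial>lebesgue) = ennreal (\<integral>x. H x \<partial>lebesgue)"
      by (rule nn_integral_eq_integral[OF Hint Hnn0])
    then have "ennreal (\<integral>x. H x \<partial>lebesgue) < ennreal \<epsilon>"
      using Hnn fe by simp
    then have HI: "(\<integral>x. H x \<partial>lebesgue) < \<epsilon>"
      using ennreal_less_iff[OF integral_nonneg_AE[OF Hnn0]] by blast
    have "(\<integral>x. g x * g x \<partial>lebesgue) \<le> (\<integral>x. H x + 2 * (g x * f x) \<partial>lebesgue)"
    proof (rule integral_mono[OF gg])
      show "integrable lebesgue (\<lambda>x. H x + 2 * (g x * f x))" using Hint gf by auto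
      fix x
      show "g x * g x \<le> H x + 2 * (g x * f x)"
      proof (cases "x \<in> \<Omega>")
        case True
        have "0 \<le> f x * f x" by simp
        then show ?thesis using True by (simp add: H_def power2_eq_square algebra_simps)
      next
        case False
        then have "g x = 0" using g unfolding good_def by auto
        then show ?thesis using False by (simp add: H_def)
      qed
    qed
    also have "\<dots> = (\<integral>x. H x \<partial>lebesgue)" using Hint gf by simp
    finally show ?thesis using HI by linarith
  qed
  have "(\<integral>x. g x * g x \<partial>lebesgue) \<le> 0"
  proof (rule ccontr)
    assume "\<not> ?thesis"
    then have "0 < (\<integral>x. g x * g x \<partial>lebesgue)" by simp
    from small[OF this] show False by simp
  qed
  moreover have "0 \<le> (\<integral>x. g x * g x \<partial>lebesgue)" by (intro integral_nonneg_AE AE_I2) simp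
  ultimately have "(\<integral>x. g x * g x \<partial>lebesgue) = 0" by simp
  then have "AE x in lebesgue. g x * g x = 0"
    using integral_nonneg_eq_0_iff_AE[OF gg] by simp
  then show ?thesis by eventually_elim simp
qed

end


context kset begin

lemma good_ind:
  assumes "A \<in> sets lebesgue" "A \<subseteq> \<Omega>"
  shows "good (indicator A :: 'a \<Rightarrow> real)"
  unfolding good_def using assms by (auto simp: indicator_def intro!: exI[of _ 1])

lemma P0_sym: "P0 x y = P0 y x"
  unfolding P0_def using sym by auto

definition Ipair :: "'a set \<Rightarrow> 'a set \<Rightarrow> real" where
  "Ipair A B = (\<integral>z. (case z of (x, y) \<Rightarrow> indicator A x * indicator B y) * (case z of (x, y) \<Rightarrow> P0 x y) \<partial>(lebesgue \<Otimes>\<^sub>M lebesgue))"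

lemma Ipair_int:
  assumes "A \<in> sets lebesgue" "A \<subseteq> \<Omega>" "B \<in> sets lebesgue" "B \<subseteq> \<Omega>"
  shows "integrable (lebesgue \<Otimes>\<^sub>M lebesgue) (\<lambda>z. (case z of (x, y) \<Rightarrow> indicator A x * indicator B y) * (case z of (x, y) \<Rightarrow> P0 x y))"
proof -
  obtain MP where MP: "\<And>x y. \<bar>P0 x y\<bar> \<le> MP" using P0_bound by blast
  show ?thesis
    by (rule int2[OF good_ind[OF assms(1,2)] good_ind[OF assms(3,4)] P0_meas2, where M=MP]) (auto simp: MP)
qed

lemma Ipair_eq:
  assumes A: "A \<in> sets lebesgue" "A \<subseteq> \<Omega>" and B: "B \<in> sets lebesgue" "B \<subseteq> \<Omega>"
  shows "Ipair A B = (LINT x:A|lebesgue. (LINT y:B|lebesgue. \<Phi> x y))"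
proof -
  have eqf: "(\<lambda>z. (case z of (x, y) \<Rightarrow> indicator A x * indicator B y) * (case z of (x, y) \<Rightarrow> P0 x y))
     = (\<lambda>(x, y). indicator A x * indicator B y * P0 x y)"
    by (auto simp: fun_eq_iff)
  have int: "integrable (lebesgue \<Otimes>\<^sub>M lebesgue) (\<lambda>(x, y). (indicator A x * indicator B y * P0 x y :: real))"
    using Ipair_int[OF A B] unfolding eqf .
  have "Ipair A B = (\<integral>x. (\<integral>y. indicator A x * indicator B y * P0 x y \<partial>lebesgue) \<partial>lebesgue)"
    unfolding Ipair_def eqf using leb_pair.integral_fst[OF int] by simp
  also have "\<dots> = (\<integral>x. indicator A x *\<^sub>R (LINT y:B|lebesgue. \<Phi> x y) \<partial>lebesgue)"
  proof (intro Bochner_Integration.integral_cong refl)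
    fix x
    show "(\<integral>y. indicator A x * indicator B y * P0 x y \<partial>lebesgue) = indicator A x *\<^sub>R (LINT y:B|lebesgue. \<Phi> x y)"
    proof (cases "x \<in> A")
      case True
      have "(\<integral>y. indicator A x * indicator B y * P0 x y \<partial>lebesgue) = (\<integral>y. indicator B y *\<^sub>R \<Phi> x y \<partial>lebesgue)"
        using True A B by (intro Bochner_Integration.integral_cong refl) (auto simp: indicator_def P0_def)
      then show ?thesis using True by (simp add: set_lebesgue_integral_def)
    next
      case False
      then show ?thesis by simp
    qed
  qed
  also have "\<dots> = (LINT x:A|lebesgue. (LINT y:B|lebesgue. \<Phi> x y))"
    by (simp add: set_lebesgue_integral_def)
  finally show ?thesis .
qed

lemma Ipair_sym:
  assumes A: "A \<in> sets lebesgue" "A \<subseteq> \<Omega>" and B: "B \<in> sets lebesgue" "B \<subseteq> \<Omega>"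
  shows "Ipair A B = Ipair B A"
proof -
  define F where "F = (\<lambda>z. (case z of (x, y) \<Rightarrow> indicator A x * indicator B y) * (case z of (x, y) \<Rightarrow> P0 x y) :: real)"
  have Fm: "F \<in> borel_measurable (lebesgue \<Otimes>\<^sub>M lebesgue)"
    using Ipair_int[OF A B] unfolding F_def by blast
  have "Ipair A B = integral\<^sup>L (lebesgue \<Otimes>\<^sub>M lebesgue) F" unfolding Ipair_def F_def ..
  also have "\<dots> = (\<integral>(x, y). F (y, x) \<partial>(lebesgue \<Otimes>\<^sub>M lebesgue))"
    by (rule leb_pair.integral_product_swap[OF Fm, symmetric])
  also have "\<dots> = Ipair B A"
    unfolding Ipair_def F_def
    by (intro Bochner_Integration.integral_cong refl) (auto simp: P0_sym)
  finally show ?thesis .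
qed

lemma good_add:
  assumes "good a" "good b" shows "good (\<lambda>x. a x + b x)"
proof -
  obtain A B where A: "\<And>x. \<bar>a x\<bar> \<le> A" and B: "\<And>x. \<bar>b x\<bar> \<le> B"
    using assms unfolding good_def by blast
  have "\<bar>a x + b x\<bar> \<le> A + B" for x using A[of x] B[of x] by linarith
  then show ?thesis using assms unfolding good_def by auto
qed

lemma good_sum:
  assumes "finite I" "\<And>i. i \<in> I \<Longrightarrow> good (f i)"
  shows "good (\<lambda>x. \<Sum>i\<in>I. f i x)"
  using assms
proof (induction I rule: finite_induct)
  case empty
  then show ?case unfolding good_def by auto
next
  case (insert a F)
  then have "good (\<lambda>x. f a x + (\<Sum>i\<in>F. f i x))" by (intro good_add) auto
  then show ?case using insert by simp
qed

lemma Qf_sum: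
  fixes \<omega> :: "'n::finite \<Rightarrow> 'a set" and a :: "'n \<Rightarrow> real"
  assumes hyp: "\<And>i. \<omega> i \<in> sets lebesgue \<and> \<omega> i \<subseteq> \<Omega>"
  shows "Qf (\<lambda>x. \<Sum>i\<in>UNIV. a i * indicator (\<omega> i) x) = (\<Sum>i\<in>UNIV. \<Sum>j\<in>UNIV. a i * a j * Ipair (\<omega> i) (\<omega> j))"
proof -
  define F where "F i j = (\<lambda>z. (case z of (x, y) \<Rightarrow> indicator (\<omega> i) x * indicator (\<omega> j) y) * (case z of (x, y) \<Rightarrow> P0 x y) :: real)" for i j
  have Fint: "integrable (lebesgue \<Otimes>\<^sub>M lebesgue) (F i j)" for i j
    unfolding F_def using hyp by (intro Ipair_int) auto
  have pw: "(case z of (x, y) \<Rightarrow> (\<Sum>i\<in>UNIV. a i * indicator (\<omega> i) x) * (\<Sum>i\<in>UNIV. a i * indicator (\<omega> i) y)) * (case z of (x, y) \<Rightarrow> P0 x y)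
      = (\<Sum>i\<in>UNIV. \<Sum>j\<in>UNIV. a i * a j * F i j z)" for z
  proof -
    obtain x y where z: "z = (x, y)" by (cases z)
    have "(\<Sum>i\<in>UNIV. a i * indicator (\<omega> i) x) * (\<Sum>i\<in>UNIV. a i * indicator (\<omega> i) y) * P0 x y
        = (\<Sum>i\<in>UNIV. \<Sum>j\<in>UNIV. (a i * indicator (\<omega> i) x) * (a j * indicator (\<omega> j) y) * P0 x y)"
      by (subst sum_product) (simp only: sum_distrib_right)
    also have "\<dots> = (\<Sum>i\<in>UNIV. \<Sum>j\<in>UNIV. a i * a j * F i j z)"
      unfolding F_def z by (intro sum.cong refl) simp
    finally show ?thesis unfolding z by simp
  qed
  have "Qf (\<lambda>x. \<Sum>i\<in>UNIV. a i * indicator (\<omega> i) x) = (\<integral>z. (\<Sum>i\<in>UNIV. \<Sum>j\<in>UNIV. a i * a j * F i j z) \<partial>(lebesgue \<Otimes>\<^sub>M lebesgue))"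
    unfolding Qf_def pw ..
  also have "\<dots> = (\<Sum>i\<in>UNIV. \<integral>z. (\<Sum>j\<in>UNIV. a i * a j * F i j z) \<partial>(lebesgue \<Otimes>\<^sub>M lebesgue))"
    by (rule Bochner_Integration.integral_sum) (rule Bochner_Integration.integrable_sum, use Fint in auto)
  also have "\<dots> = (\<Sum>i\<in>UNIV. \<Sum>j\<in>UNIV. \<integral>z. a i * a j * F i j z \<partial>(lebesgue \<Otimes>\<^sub>M lebesgue))"
    by (intro sum.cong refl Bochner_Integration.integral_sum) (use Fint in auto)
  also have "\<dots> = (\<Sum>i\<in>UNIV. \<Sum>j\<in>UNIV. a i * a j * Ipair (\<omega> i) (\<omega> j))"
    unfolding Ipair_def F_def by simp
  finally show ?thesis .
qed

end

theorem theorem5p3: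
  fixes \<Omega> :: "'a::euclidean_space set"
    and \<Phi> :: "'a \<Rightarrow> 'a \<Rightarrow> real"
    and \<omega> :: "'n::finite \<Rightarrow> 'a set"
  assumes "compact \<Omega>"
    and "continuous_on (\<Omega> \<times> \<Omega>) (\<lambda>(x, y). \<Phi> x y)"
    and "\<forall>x\<in>\<Omega>. \<forall>y\<in>\<Omega>. \<Phi> x y = \<Phi> y x"
    and "pd_kernel \<Omega> \<Phi>"
    and "dense_in_L2 \<Omega> (native_space \<Omega> \<Phi>)"
    and "\<forall>i. \<omega> i \<in> sets lebesgue \<and> \<omega> i \<subseteq> \<Omega> \<and> measure lebesgue (\<omega> i) > 0"
    and "indicators_lin_indep_L2 \<Omega> \<omega>"
  shows "transpose (Kmat \<Phi> \<omega>) = Kmat \<Phi> \<omega> \<and> pos_def_matrix (Kmat \<Phi> \<omega>) \<and> invertible (Kmat \<Phi> \<omega>)"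
proof -
  interpret kset \<Omega> \<Phi> using assms(1-4) by unfold_locales
  have hyp: "\<And>i. \<omega> i \<in> sets lebesgue \<and> \<omega> i \<subseteq> \<Omega>" using assms(6) by auto
  define m where "m i = measure lebesgue (\<omega> i)" for i
  have m0: "m i > 0" for i using assms(6) unfolding m_def by auto
  have Kent: "Kmat \<Phi> \<omega> $ i $ j = 1 / m i * (1 / m j) * Ipair (\<omega> i) (\<omega> j)" for i j
    unfolding Kmat_def m_def using Ipair_eq[of "\<omega> i" "\<omega> j"] hyp by simp
  have symK: "transpose (Kmat \<Phi> \<omega>) = Kmat \<Phi> \<omega>"
    unfolding transpose_def vec_eq_iff
    using Kent Ipair_sym hyp by (simp add: mult.commute)
  have quad: "v \<bullet> (Kmat \<Phi> \<omega> *v v) = Qf (\<lambda>x. \<Sum>i\<in>UNIV. (v $ i / m i) * indicator (\<omega> i) x)" for v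
  proof -
    have "v \<bullet> (Kmat \<Phi> \<omega> *v v) = (\<Sum>i\<in>UNIV. \<Sum>j\<in>UNIV. (v $ i / m i) * (v $ j / m j) * Ipair (\<omega> i) (\<omega> j))"
      unfolding inner_vec_def matrix_vector_mult_def Kent
      by (simp add: sum_distrib_left algebra_simps)
    also have "\<dots> = Qf (\<lambda>x. \<Sum>i\<in>UNIV. (v $ i / m i) * indicator (\<omega> i) x)"
      by (rule Qf_sum[symmetric]) (rule hyp)
    finally show ?thesis .
  qed
  have pos: "pos_def_matrix (Kmat \<Phi> \<omega>)"
    unfolding pos_def_matrix_def
  proof (intro allI impI)
    fix v :: "real ^ 'n" assume v0: "v \<noteq> 0"
    define g where "g x = (\<Sum>i\<in>UNIV. (v $ i / m i) * indicator (\<omega> i) x)" for x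
    have gg: "good g"
    proof -
      have "good (\<lambda>x. (v $ i / m i) * indicator (\<omega> i) x)" for i
      proof -
        have "good (\<lambda>x. indicator (\<omega> i) x * (v $ i / m i))"
          by (rule good_mult[OF good_ind, where M="\<bar>v $ i / m i\<bar>"]) (use hyp in auto)
        then show ?thesis by (simp add: mult.commute)
      qed
      then show ?thesis unfolding g_def by (intro good_sum) auto
    qed
    have "0 \<le> Qf g" by (rule Q_nonneg[OF gg])
    moreover have "Qf g \<noteq> 0"
    proof
      assume "Qf g = 0"
      from zero_ae[OF gg this assms(5)]
      have "AE x in lebesgue. x \<in> \<Omega> \<longrightarrow> (\<Sum>i\<in>UNIV. (v $ i / m i) * indicator (\<omega> i) x) = 0"
        unfolding g_def .
      then have "\<forall>i. v $ i / m i = 0"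
        using assms(7)[unfolded indicators_lin_indep_L2_def, rule_format, of "\<lambda>i. v $ i / m i"] by blast
      then have "\<forall>i. v $ i = 0" using m0 by (metis divide_eq_0_iff less_irrefl)
      then have "v = 0" by (simp add: vec_eq_iff)
      with v0 show False by simp
    qed
    ultimately show "0 < v \<bullet> (Kmat \<Phi> \<omega> *v v)" unfolding quad g_def[symmetric] by simp
  qed
  have inv: "invertible (Kmat \<Phi> \<omega>)"
  proof -
    have "\<forall>x. Kmat \<Phi> \<omega> *v x = 0 \<longrightarrow> x = 0"
    proof (intro allI impI)
      fix x assume "Kmat \<Phi> \<omega> *v x = 0"
      then have "x \<bullet> (Kmat \<Phi> \<omega> *v x) = 0" by simp
      then show "x = 0" using pos unfolding pos_def_matrix_def by force
    qed
    then show ?thesis unfolding invertible_left_inverse matrix_left_invertible_ker .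
  qed
  show ?thesis using symK pos inv by blast
qed



end
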